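(* Let $p$ be an odd prime and let $G_{g\,\mathsf{ANY},\,h\,\mathsf{ANY}}(p)$ denote the number of integers $h$ with $1\le h\le p-1$ for which there exists an integer $g$ with $1\le g\le p-1$ and $g^{h}\equiv h\pmod p$. Then \[ \left|G_{g\,\mathsf{ANY},\,h\,\mathsf{ANY}}(p)-\sum_{e\mid p-1}\frac{1}{e}\,\phi\!\left(\frac{p-1}{e}\right)\right|\le d(p-1)^{2}\sqrt{p}\,(1+\ln p). \]
   Context: $\phi$ is Euler's totient function, $d(n)$ denotes the number of positive divisors of $n$, the sum runs over positive divisors $e$ of $p-1$, and $\ln$ is the natural logarithm. *)

theory Defs
  imports "HOL-Analysis.Analysis" "HOL-Number_Theory.Number_Theory"
begin

definition G_any_any :: "nat \<Rightarrow> nat" where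
  "G_any_any p = card {h \<in> {1..p-1}. \<exists>g \<in> {1..p-1}. [g ^ h = h] (mod p)}"

definition num_divisors :: "nat \<Rightarrow> nat" where
  "num_divisors n = card {d. d dvd n}"

end

theory Submission
  imports Defs
begin

lemma jordan_sin:
  fixes x :: real
  assumes "0 \<le> x" "x \<le> pi/2"
  shows "2 / pi * x \<le> sin x"
proof -
  have cv: "convex_on {0..pi/2} (\<lambda>x. - sin x)"
  proof (rule convex_on_realI[where f'="\<lambda>x. - cos x"])
    show "connected {0..pi/2::real}" by simp
    show "((\<lambda>x. - sin x) has_real_derivative - cos x) (at x)" for x
      by (auto intro!: derivative_eq_intros)
    show "- cos x \<le> - cos y" if "x \<in> {0..pi/2}" "y \<in> {0..pi/2}" "x \<le> y" for x y
      using that by (auto intro!: cos_monotone_0_pi_le)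
  qed
  define t where "t = x / (pi/2)"
  have t: "0 \<le> t" "t \<le> 1" using assms pi_gt_zero by (auto simp: t_def field_simps)
  have "- sin ((1 - t) *\<^sub>R 0 + t *\<^sub>R (pi/2)) \<le> (1 - t) * (- sin 0) + t * (- sin (pi/2))"
    by (rule convex_onD[OF cv]) (use t in auto)
  moreover have "(1 - t) *\<^sub>R 0 + t *\<^sub>R (pi/2) = x" using pi_gt_zero by (simp add: t_def)
  ultimately have "t \<le> sin x" by simp
  thus ?thesis by (simp add: t_def field_simps)
qed


definition ee :: "nat \<Rightarrow> int \<Rightarrow> complex" where
  "ee p t = exp (2 * of_real pi * \<i> * of_int t / of_nat p)"

lemma ee_add: "ee p (s + t) = ee p s * ee p t"
  by (simp add: ee_def distrib_left add_divide_distrib exp_add)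

lemma ee_norm [simp]: "norm (ee p t) = 1"
  by (simp add: ee_def)

lemma ee_zero [simp]: "ee p 0 = 1"
  by (simp add: ee_def)

lemma ee_mult_p: "p > 0 \<Longrightarrow> ee p (int p * k) = 1"
proof -
  assume "p > 0"
  have "2 * of_real pi * \<i> * of_int (int p * k) / of_nat p = 2 * of_real pi * \<i> * of_int k"
    using \<open>p > 0\<close> by (simp add: field_simps)
  hence "ee p (int p * k) = exp (2 * of_real pi * \<i> * of_int k)" by (simp add: ee_def)
  also have "\<dots> = 1" by (simp add: exp_eq_1) 
  finally show ?thesis .
qed

lemma ee_cong: "p > 0 \<Longrightarrow> [s = t] (mod int p) \<Longrightarrow> ee p s = ee p t"
proof -
  assume "p > 0" "[s = t] (mod int p)"
  then obtain k where "s = t + int p * k"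
    by (metis cong_iff_lin cong_sym)
  thus ?thesis using ee_mult_p[OF \<open>p > 0\<close>] by (simp add: ee_add)
qed

lemma ee_eq_1_iff: "p > 0 \<Longrightarrow> ee p t = 1 \<longleftrightarrow> int p dvd t"
proof
  assume p: "p > 0" and "ee p t = 1"
  then obtain k :: int where k: "Im (2 * of_real pi * \<i> * of_int t / of_nat p) = 2 * pi * k"
    by (auto simp: ee_def exp_eq_1)
  hence "2 * pi * t / p = 2 * pi * k" by simp
  hence "real_of_int t = p * k" using p by (simp add: field_simps)
  hence "t = int p * k" by (metis of_int_eq_iff of_int_mult of_int_of_nat_eq)
  thus "int p dvd t" by simp
next
  assume "p > 0" "int p dvd t"
  thus "ee p t = 1" using ee_mult_p by auto
qed

lemma ee_pow: "ee p t ^ k = ee p (int k * t)"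
proof -
  have "ee p t ^ k = exp (of_nat k * (2 * of_real pi * \<i> * of_int t / of_nat p))"
    by (simp add: ee_def exp_of_nat_mult[symmetric])
  also have "\<dots> = ee p (int k * t)" by (simp add: ee_def field_simps)
  finally show ?thesis .
qed

lemma ee_cnj: "cnj (ee p t) = ee p (- t)"
  by (simp add: ee_def exp_cnj)

lemma ee_orth:
  assumes "p > 0"
  shows "(\<Sum>a<p. ee p (int a * t)) = (if int p dvd t then of_nat p else 0)"
proof (cases "int p dvd t")
  case True
  have "ee p (int a * t) = 1" for a using True assms
    by (simp add: ee_eq_1_iff)
  thus ?thesis using True by simp
next
  case False
  define w where "w = ee p t"
  have w1: "w \<noteq> 1" using False assms by (simp add: w_def ee_eq_1_iff)
  have wp: "w ^ p = 1" using assms by (simp add: w_def ee_pow ee_eq_1_iff)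
  have "(\<Sum>a<p. ee p (int a * t)) = (\<Sum>a<p. w ^ a)" by (simp add: w_def ee_pow)
  also have "\<dots> = 0" using w1 wp by (simp add: sum_gp_strict)
  finally show ?thesis using False by simp
qed


lemma ee_as_cis: "ee p t = cis (2 * pi * t / p)"
  by (simp add: ee_def cis_conv_exp mult_ac)

lemma norm_1_minus_ee:
  assumes "0 < b" "b < int p"
  shows "norm (1 - ee p b) = 2 * sin (pi * b / p)"
proof -
  define x where "x = pi * b / p"
  have p: "p > 0" using assms by linarith
  have x0: "0 < x" using assms p by (simp add: x_def)
  have x1: "x < pi" using assms p by (simp add: x_def field_simps)
  have sx: "sin x > 0" using x0 x1 sin_gt_zero by blast
  have e: "ee p b = cis (2 * x)" by (simp add: ee_as_cis x_def mult.assoc)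
  have "(norm (1 - ee p b))^2 = (1 - cos (2*x))^2 + (sin (2*x))^2"
    by (simp add: e cmod_power2)
  also have "\<dots> = 2 - 2 * cos (2 * x)"
    using sin_cos_squared_add[of "2*x"] by (simp add: power2_eq_square algebra_simps)
  also have "\<dots> = (2 * sin x)^2" by (simp add: cos_double_sin power2_eq_square)
  finally have "(norm (1 - ee p b))^2 = (2 * sin x)^2" .
  hence "norm (1 - ee p b) = 2 * sin x"
    using sx power2_eq_iff_nonneg[of "norm (1 - ee p b)" "2 * sin x"] by simp
  thus ?thesis by (simp add: x_def)
qed

lemma geom_bound:
  fixes w :: complex
  assumes "w \<noteq> 1" "norm w = 1"
  shows "norm (\<Sum>y\<in>{1..N}. w ^ y) \<le> 2 / norm (1 - w)"
proof -
  have "(\<Sum>y\<in>{1..N}. w ^ y) = (\<Sum>y<N. w ^ Suc y)"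
    by (rule sum.reindex_bij_witness[of _ Suc "\<lambda>y. y - 1"]) auto
  also have "\<dots> = w * (\<Sum>y<N. w ^ y)" by (simp add: sum_distrib_left)
  also have "\<dots> = w * ((1 - w ^ N) / (1 - w))" using assms by (simp add: sum_gp_strict)
  finally have eq: "(\<Sum>y\<in>{1..N}. w ^ y) = w * ((1 - w ^ N) / (1 - w))" .
  have "norm (1 - w ^ N) \<le> 2"
    using norm_triangle_ineq4[of 1 "w^N"] assms by (simp add: norm_power)
  moreover have "norm (1 - w) > 0" using assms by simp
  ultimately show ?thesis unfolding eq using assms
    by (simp add: norm_mult norm_divide divide_right_mono)
qed

definition U :: "nat \<Rightarrow> nat \<Rightarrow> int \<Rightarrow> complex" where
  "U p N c = (\<Sum>y\<in>{1..N}. ee p (c * int y))"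

lemma U_bound:
  assumes "0 < c" "c < int p"
  shows "norm (U p N c) \<le> 1 / sin (pi * c / p)"
proof -
  have p: "p > 0" using assms by linarith
  have "U p N c = (\<Sum>y\<in>{1..N}. (ee p c) ^ y)" by (simp add: U_def ee_pow mult.commute)
  also have "norm \<dots> \<le> 2 / norm (1 - ee p c)"
  proof (rule geom_bound)
    show "ee p c \<noteq> 1" using assms p by (auto simp: ee_eq_1_iff zdvd_not_zless)
  qed simp
  also have "\<dots> = 1 / sin (pi * c / p)" using norm_1_minus_ee[OF assms] by simp
  finally show ?thesis .
qed

lemma sin_lower:
  assumes "0 < c" "c < p"
  shows "sin (pi * c / p) \<ge> 2 * min c (p - c) / p"
proof -
  have p: "p > 0" using assms by linarith
  show ?thesis
  proof (cases "2 * c \<le> p")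
    case True
    have "2 / pi * (pi * c / p) \<le> sin (pi * c / p)"
      using True p assms by (intro jordan_sin) (auto simp: field_simps)
    thus ?thesis using True by (simp add: min_def)
  next
    case False
    have "sin (pi * c / p) = sin (pi - pi * c / p)" by simp
    also have "pi - pi * c / p = pi * (p - c) / p" using p by (simp add: field_simps)
    finally have s: "sin (pi * c / p) = sin (pi * (p - c) / p)" .
    have "2 / pi * (pi * (p - c) / p) \<le> sin (pi * (p - c) / p)"
      using False p assms by (intro jordan_sin) (auto simp: field_simps)
    thus ?thesis using False s by (simp add: min_def)
  qed
qed


lemma harm_upper: "m \<ge> 1 \<Longrightarrow> harm m \<le> 1 + ln (real m)"
proof (induction m rule: dec_induct)
  case base
  then show ?case by (simp add: harm_def)
next
  case (step k)
  have "ln (real k / real (Suc k)) = ln (1 + (- 1 / real (Suc k)))"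
    using step by (simp add: field_simps)
  also have "\<dots> \<le> - 1 / real (Suc k)"
    by (rule ln_add_one_self_le_self2) (use step in \<open>auto simp: field_simps\<close>)
  finally have "ln (real k) - ln (real (Suc k)) \<le> - 1 / real (Suc k)"
    using step by (simp add: ln_div)
  moreover have "harm (Suc k) = harm k + 1 / real (Suc k)" by (simp add: harm_Suc divide_inverse)
  ultimately show ?case using step by linarith
qed

lemma sum_inv_sin:
  assumes "odd p" "p \<ge> 3"
  shows "(\<Sum>c\<in>{1..p-1}. 1 / sin (pi * real c / real p)) \<le> real p * (1 + ln (real p)) - sqrt (real p)"
proof -
  obtain m where pm: "p = 2 * m + 1" using assms oddE by blast
  have m1: "m \<ge> 1" using assms pm by linarith
  have le: "1 / sin (pi * real c / real p) \<le> real p / (2 * real (min c (p - c)))"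
    if "c \<in> {1..p-1}" for c
  proof -
    have s: "sin (pi * real c / real p) \<ge> 2 * min (real c) (real p - real c) / real p"
      using that assms by (intro sin_lower) auto
    have mpos: "min (real c) (real p - real c) > 0" using that assms by auto
    have "min (real c) (real p - real c) = real (min c (p - c))" using that by auto
    hence s': "sin (pi * real c / real p) \<ge> 2 * real (min c (p - c)) / real p" using s by simp
    have pos: "2 * real (min c (p - c)) / real p > 0" using mpos assms
      by (metis \<open>min (real c) (real p - real c) = real (min c (p - c))\<close> divide_pos_pos mult_pos_pos of_nat_0_less_iff zero_less_numeral not_less order_less_le_trans) 
    have "1 / sin (pi * real c / real p) \<le> 1 / (2 * real (min c (p - c)) / real p)"
      using s' pos by (intro frac_le) auto
    thus ?thesis by simp
  qed
  have "(\<Sum>c\<in>{1..p-1}. 1 / sin (pi * real c / real p)) \<le> (\<Sum>c\<in>{1..p-1}. real p / (2 * real (min c (p - c))))"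
    by (intro sum_mono le)
  also have "(\<Sum>c\<in>{1..p-1}. real p / (2 * real (min c (p - c)))) = (\<Sum>c\<in>{1..m} \<union> {m+1..2*m}. real p / (2 * real (min c (p - c))))"
    by (rule sum.cong) (use pm in auto)
  also have "(\<Sum>c\<in>{1..m} \<union> {m+1..2*m}. real p / (2 * real (min c (p - c))))
      = (\<Sum>c\<in>{1..m}. real p / (2 * real (min c (p - c)))) + (\<Sum>c\<in>{m+1..2*m}. real p / (2 * real (min c (p - c))))"
    by (intro sum.union_disjoint) auto
  also have "(\<Sum>c\<in>{1..m}. real p / (2 * real (min c (p - c)))) = (\<Sum>c\<in>{1..m}. real p / (2 * real c))"
    using pm by (intro sum.cong) auto
  also have "(\<Sum>c\<in>{m+1..2*m}. real p / (2 * real (min c (p - c)))) = (\<Sum>c\<in>{1..m}. real p / (2 * real c))"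
    by (rule sum.reindex_bij_witness[of _ "\<lambda>c. p - c" "\<lambda>c. p - c"]) (use pm in auto)
  also have "(\<Sum>c\<in>{1..m}. real p / (2 * real c)) + (\<Sum>c\<in>{1..m}. real p / (2 * real c)) = real p * harm m"
    by (simp add: harm_def sum_distrib_left field_simps flip: sum.distrib)
  also have "\<dots> \<le> real p * (1 + ln (real m))"
    using harm_upper[OF m1] by (intro mult_left_mono) auto
  also have "\<dots> \<le> real p * (1 + ln (real p)) - sqrt (real p)"
  proof -
    have "ln (real p) - ln (real m) = ln (real p / real m)" using m1 pm by (simp add: ln_div)
    also have "\<dots> \<ge> ln 2" using m1 pm by (subst ln_le_cancel_iff) (auto simp: field_simps)
    finally have l: "ln (real p) - ln (real m) \<ge> 2/3" using ln2_ge_two_thirds by linarith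
    have sp: "sqrt (real p) \<ge> 3/2"
      using assms by (intro real_le_rsqrt) (auto simp: power2_eq_square)
    have "sqrt (real p) * sqrt (real p) = real p" by simp
    hence "real p \<ge> sqrt (real p) * (3/2)" using sp
      by (metis mult_left_mono real_sqrt_ge_zero of_nat_0_le_iff)
    have "real p * (ln (real p) - ln (real m)) \<ge> real p * (2/3)"
      using l by (intro mult_left_mono) auto
    hence "real p * (ln (real p) - ln (real m)) \<ge> sqrt (real p)"
      using \<open>real p \<ge> sqrt (real p) * (3/2)\<close> by linarith
    thus ?thesis by (simp add: algebra_simps)
  qed
  finally show ?thesis .
qed

definition F :: "nat \<Rightarrow> nat set \<Rightarrow> nat \<Rightarrow> complex" where
  "F p A a = (\<Sum>x\<in>A. ee p (int a * int x))"

lemma F_mod: "p > 0 \<Longrightarrow> F p A (a mod p) = F p A a"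
  unfolding F_def
  by (intro sum.cong refl ee_cong) (auto simp: cong_def mod_mult_left_eq zmod_int)

lemma count_formula:
  assumes "p > 0" "X \<subseteq> {..<p}" "H \<subseteq> {..<p}"
  shows "of_nat p * of_nat (card (X \<inter> H)) = (\<Sum>a<p. cnj (F p X a) * F p H a)"
proof -
  have fX: "finite X" "finite H" using assms finite_subset by auto
  have "(\<Sum>a<p. cnj (F p X a) * F p H a) = (\<Sum>a<p. \<Sum>h\<in>H. \<Sum>x\<in>X. ee p (int a * (int h - int x)))"
  proof (rule sum.cong[OF refl])
    fix a
    have "cnj (F p X a) * F p H a = (\<Sum>x\<in>X. \<Sum>h\<in>H. cnj (ee p (int a * int x)) * ee p (int a * int h))"
      unfolding F_def cnj_sum sum_product ..
    also have "\<dots> = (\<Sum>x\<in>X. \<Sum>h\<in>H. ee p (int a * (int h - int x)))"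
      by (intro sum.cong refl) (simp add: ee_cnj flip: ee_add, simp add: algebra_simps)
    also have "\<dots> = (\<Sum>h\<in>H. \<Sum>x\<in>X. ee p (int a * (int h - int x)))"
      by (rule sum.swap)
    finally show "cnj (F p X a) * F p H a = (\<Sum>h\<in>H. \<Sum>x\<in>X. ee p (int a * (int h - int x)))" .
  qed
  also have "\<dots> = (\<Sum>h\<in>H. \<Sum>a<p. \<Sum>x\<in>X. ee p (int a * (int h - int x)))"
    by (rule sum.swap)
  also have "\<dots> = (\<Sum>h\<in>H. \<Sum>x\<in>X. \<Sum>a<p. ee p (int a * (int h - int x)))"
    by (intro sum.cong refl sum.swap)
  also have "\<dots> = (\<Sum>h\<in>H. \<Sum>x\<in>X. if x = h then of_nat p else 0)"
  proof (intro sum.cong refl)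
    fix x h assume "x \<in> X" "h \<in> H"
    hence "x < p" "h < p" using assms by auto
    have "int p dvd (int h - int x) \<longleftrightarrow> x = h"
    proof
      assume "int p dvd (int h - int x)"
      then obtain k where k: "int h - int x = int p * k" by blast
      have "k = 0"
      proof (rule ccontr)
        assume "k \<noteq> 0"
        hence "\<bar>k\<bar> \<ge> 1" by linarith
        hence "int p * 1 \<le> int p * \<bar>k\<bar>" by (intro mult_left_mono) auto
        hence "\<bar>int p * k\<bar> \<ge> int p" by (simp add: abs_mult)
        thus False using k \<open>x < p\<close> \<open>h < p\<close> by linarith
      qed
      thus "x = h" using k by simp
    qed simp
    thus "(\<Sum>a<p. ee p (int a * (int h - int x))) = (if x = h then of_nat p else 0)"
      using ee_orth[OF assms(1), of "int h - int x"] by simp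
  qed
  also have "\<dots> = (\<Sum>h\<in>H. if h \<in> X then of_nat p else 0)"
    using fX by (intro sum.cong refl) (simp add: sum.delta)
  also have "\<dots> = of_nat p * of_nat (card (H \<inter> X))"
    using fX by (simp add: sum.If_cases Int_def)
  also have "card (H \<inter> X) = card (X \<inter> H)" by (simp add: Int_commute)
  finally show ?thesis by simp
qed

lemma parseval:
  assumes "p > 0" "H \<subseteq> {..<p}"
  shows "(\<Sum>a<p. (norm (F p H a))^2) = real p * real (card H)"
proof -
  have "complex_of_real (\<Sum>a<p. (norm (F p H a))^2) = (\<Sum>a<p. cnj (F p H a) * F p H a)"
    by (simp only: of_real_sum complex_norm_square mult.commute)
  also have "\<dots> = of_nat p * of_nat (card (H \<inter> H))"
    using count_formula[OF assms(1) assms(2) assms(2)] by simp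
  finally have "complex_of_real (\<Sum>a<p. (norm (F p H a))^2) = complex_of_real (real p * real (card H))"
    by simp
  thus ?thesis by (simp only: of_real_eq_iff)
qed


lemma coprime_small:
  fixes p k :: nat
  assumes "prime p" "0 < k" "k < p"
  shows "coprime k p"
proof -
  have "\<not> p dvd k" using assms by (auto dest: dvd_imp_le)
  thus ?thesis using prime_imp_coprime[OF assms(1)] by (simp add: coprime_commute)
qed

lemma mulmod_inj:
  fixes p k :: nat
  assumes "prime p" "0 < k" "k < p"
  shows "inj_on (\<lambda>h. (k * h) mod p) {..<p}"
proof (rule inj_onI)
  fix x y assume xy: "x \<in> {..<p}" "y \<in> {..<p}" "(k * x) mod p = (k * y) mod p"
  hence "[k * x = k * y] (mod p)" by (simp add: cong_def)
  hence "[x = y] (mod p)" using cong_mult_lcancel_nat[OF coprime_small[OF assms]] by simp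
  thus "x = y" using xy cong_less_modulus_unique_nat by auto
qed

definition subgrp :: "nat \<Rightarrow> nat set \<Rightarrow> bool" where
  "subgrp p H \<longleftrightarrow> H \<subseteq> {1..<p} \<and> 1 \<in> H \<and> (\<forall>x\<in>H. \<forall>y\<in>H. (x * y) mod p \<in> H)"

lemma F_invariant:
  assumes "prime p" "subgrp p H" "k \<in> H"
  shows "F p H (a * k) = F p H a"
proof -
  have H: "H \<subseteq> {1..<p}" "\<And>x y. x \<in> H \<Longrightarrow> y \<in> H \<Longrightarrow> (x * y) mod p \<in> H"
    using assms(2) by (auto simp: subgrp_def)
  have k: "0 < k" "k < p" using H assms(3) by auto
  have p0: "p > 0" using k by simp
  define f where "f = (\<lambda>h. (k * h) mod p)"
  have inj: "inj_on f H" unfolding f_def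
    by (rule inj_on_subset[OF mulmod_inj[OF assms(1) k]]) (use H in auto)
  have fin: "finite H" using H(1) finite_subset by blast
  have img: "f ` H = H"
    by (rule endo_inj_surj[OF fin _ inj]) (use H assms(3) in \<open>auto simp: f_def\<close>)
  have "F p H (a * k) = (\<Sum>h\<in>H. ee p (int a * int (f h)))"
    unfolding F_def f_def
    by (intro sum.cong refl ee_cong[OF p0])
       (simp add: cong_def zmod_int mod_mult_right_eq mult.assoc flip: of_nat_mult)
  also have "\<dots> = (\<Sum>h\<in>f ` H. ee p (int a * int h))"
    using sum.reindex[OF inj, of "\<lambda>h. ee p (int a * int h)"] by simp
  also have "\<dots> = F p H a" using img by (simp add: F_def)
  finally show ?thesis .
qed

lemma F_bound:
  assumes "prime p" "subgrp p H" "0 < a" "a < p"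
  shows "norm (F p H a) \<le> sqrt (real p)"
proof -
  have H: "H \<subseteq> {1..<p}" "1 \<in> H"
    using assms(2) by (auto simp: subgrp_def)
  have p0: "p > 0" using assms by simp
  have fin: "finite H" using H(1) finite_subset by blast
  have cpos: "card H > 0" using fin H(2) card_gt_0_iff by blast
  define g where "g = (\<lambda>k. (a * k) mod p)"
  have inj: "inj_on g H" unfolding g_def
    by (rule inj_on_subset[OF mulmod_inj[OF assms(1) assms(3,4)]]) (use H in auto)
  have "real (card H) * (norm (F p H a))^2 = (\<Sum>k\<in>H. (norm (F p H (g k)))^2)"
    using F_invariant[OF assms(1,2)] F_mod[OF p0] by (simp add: g_def)
  also have "\<dots> = (\<Sum>b\<in>g ` H. (norm (F p H b))^2)"
    using sum.reindex[OF inj, of "\<lambda>b. (norm (F p H b))^2"] by simp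
  also have "\<dots> \<le> (\<Sum>b<p. (norm (F p H b))^2)"
    by (intro sum_mono2) (auto simp: g_def p0)
  also have "\<dots> = real p * real (card H)"
  proof -
    have "H \<subseteq> {..<p}" using H(1) by auto
    thus ?thesis using parseval[OF p0, of H] by simp
  qed
  finally have "real (card H) * (norm (F p H a))^2 \<le> real (card H) * real p" by (simp add: mult.commute)
  hence "(norm (F p H a))^2 \<le> real p" using cpos by simp
  thus ?thesis by (simp add: real_le_rsqrt)
qed


lemma U_mod: "p > 0 \<Longrightarrow> U p N (c mod int p) = U p N c"
  unfolding U_def
  by (intro sum.cong refl ee_cong) (auto simp: cong_def mod_mult_left_eq)

lemma F_prog:
  assumes "D > 0"
  shows "F p ((\<lambda>y. D * y) ` {1..N}) a = U p N (int (a * D))"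
proof -
  have inj: "inj_on (\<lambda>y. D * y) {1..N}" using assms by (auto simp: inj_on_def)
  show ?thesis
    unfolding F_def U_def using sum.reindex[OF inj, of "\<lambda>x. ee p (int a * int x)"]
    by (simp add: mult.assoc)
qed

lemma sum_U_bound:
  assumes "prime p" "odd p" "0 < D" "D < p"
  shows "(\<Sum>a\<in>{1..p-1}. norm (U p N (int (a * D)))) \<le> real p * (1 + ln (real p)) - sqrt (real p)"
proof -
  have p0: "p > 0" and p3: "p \<ge> 3" using assms prime_gt_1_nat[OF assms(1)]
  proof -
    show "p > 0" using assms(1) prime_gt_0_nat by blast
    have "p \<ge> 2" using prime_ge_2_nat[OF assms(1)] .
    moreover have "p \<noteq> 2" using assms(2) by auto
    ultimately show "p \<ge> 3" by linarith
  qed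
  define g where "g = (\<lambda>a. (D * a) mod p)"
  have inj: "inj_on g {1..p-1}" unfolding g_def
    by (rule inj_on_subset[OF mulmod_inj[OF assms(1) assms(3,4)]]) (use p0 in auto)
  have img: "g ` {1..p-1} = {1..p-1}"
  proof (rule endo_inj_surj[OF _ _ inj])
    show "g ` {1..p-1} \<subseteq> {1..p-1}"
    proof
      fix c assume "c \<in> g ` {1..p-1}"
      then obtain a where a: "a \<in> {1..p-1}" "c = (a * D) mod p" by (auto simp: g_def mult.commute)
      have "\<not> p dvd a * D"
      proof
        assume "p dvd a * D"
        hence "p dvd a \<or> p dvd D" using assms(1) prime_dvd_mult_iff by blast
        thus False using a assms by (auto dest: dvd_imp_le)
      qed
      hence "c \<noteq> 0" using a by (auto simp: dvd_eq_mod_eq_0)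
      moreover have "c < p" using a p0 by simp
      ultimately show "c \<in> {1..p-1}" by auto
    qed
  qed simp
  have "(\<Sum>a\<in>{1..p-1}. norm (U p N (int (a * D)))) = (\<Sum>a\<in>{1..p-1}. norm (U p N (int (g a))))"
  proof (intro sum.cong refl)
    fix a
    have "U p N (int (a * D)) = U p N (int (a * D) mod int p)" using U_mod[OF p0] by simp
    also have "int (a * D) mod int p = int (g a)" by (simp add: g_def zmod_int mult.commute)
    finally show "norm (U p N (int (a * D))) = norm (U p N (int (g a)))" by simp
  qed
  also have "\<dots> = (\<Sum>c\<in>g ` {1..p-1}. norm (U p N (int c)))"
    using sum.reindex[OF inj, of "\<lambda>c. norm (U p N (int c))"] by simp
  also have "\<dots> = (\<Sum>c\<in>{1..p-1}. norm (U p N (int c)))" using img by simp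
  also have "\<dots> \<le> (\<Sum>c\<in>{1..p-1}. 1 / sin (pi * real c / real p))"
  proof (rule sum_mono)
    fix c assume c: "c \<in> {1..p-1}"
    hence "0 < int c" "int c < int p" using p0 by auto
    from U_bound[OF this, of N] show "norm (U p N (int c)) \<le> 1 / sin (pi * real c / real p)" by simp
  qed
  also have "\<dots> \<le> real p * (1 + ln (real p)) - sqrt (real p)"
    by (rule sum_inv_sin[OF assms(2) p3])
  finally show ?thesis .
qed

lemma prog_count:
  assumes "prime p" "odd p" "subgrp p H" "0 < D" "D * N < p" and D: "D < p"
  shows "\<bar>real (card ((\<lambda>y. D * y) ` {1..N} \<inter> H)) - real N * real (card H) / real p\<bar>
           \<le> sqrt (real p) * (1 + ln (real p)) - 1"
proof -
  define X where "X = (\<lambda>y. D * y) ` {1..N}"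
  have p0: "p > 0" using assms(1) prime_gt_0_nat by blast
  have H: "H \<subseteq> {1..<p}" using assms(3) by (auto simp: subgrp_def)
  have X: "X \<subseteq> {..<p}"
  proof
    fix x assume "x \<in> X"
    then obtain y where "y \<in> {1..N}" "x = D * y" by (auto simp: X_def)
    hence "x \<le> D * N" by simp
    thus "x \<in> {..<p}" using assms(5) by simp
  qed
  have cX: "card X = N"
    unfolding X_def using assms(4) by (subst card_image) (auto simp: inj_on_def)
  have fH: "finite H" using H finite_subset by blast
  have sp: "{..<p} = insert 0 {1..p-1}" using p0 by auto
  have "of_nat p * of_nat (card (X \<inter> H)) = (\<Sum>a<p. cnj (F p X a) * F p H a)"
  proof -
    have "H \<subseteq> {..<p}" using H by auto
    thus ?thesis using count_formula[OF p0 X] by blast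
  qed
  also have "\<dots> = cnj (F p X 0) * F p H 0 + (\<Sum>a\<in>{1..p-1}. cnj (F p X a) * F p H a)"
    unfolding sp by (subst sum.insert) auto
  also have "cnj (F p X 0) * F p H 0 = of_nat N * of_nat (card H)"
    by (simp add: F_def cX)
  finally have eq: "of_nat p * of_nat (card (X \<inter> H)) - of_nat N * of_nat (card H)
        = (\<Sum>a\<in>{1..p-1}. cnj (F p X a) * F p H a)" by simp
  have "norm (\<Sum>a\<in>{1..p-1}. cnj (F p X a) * F p H a) \<le> (\<Sum>a\<in>{1..p-1}. norm (F p X a) * sqrt (real p))"
  proof (rule order.trans[OF norm_sum sum_mono])
    fix a assume a: "a \<in> {1..p-1}"
    have "norm (F p H a) \<le> sqrt (real p)" using a p0 by (intro F_bound[OF assms(1,3)]) auto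
    thus "norm (cnj (F p X a) * F p H a) \<le> norm (F p X a) * sqrt (real p)"
      by (simp add: norm_mult mult_left_mono)
  qed
  also have "\<dots> = sqrt (real p) * (\<Sum>a\<in>{1..p-1}. norm (U p N (int (a * D))))"
    unfolding X_def F_prog[OF assms(4)] by (simp add: sum_distrib_left mult.commute)
  also have "\<dots> \<le> sqrt (real p) * (real p * (1 + ln (real p)) - sqrt (real p))"
    by (intro mult_left_mono sum_U_bound[OF assms(1,2,4) D]) auto
  also have "\<dots> = real p * (sqrt (real p) * (1 + ln (real p)) - 1)"
    by (simp add: algebra_simps)
  finally have "norm (of_nat p * of_nat (card (X \<inter> H)) - of_nat N * of_nat (card H) :: complex)
      \<le> real p * (sqrt (real p) * (1 + ln (real p)) - 1)" unfolding eq .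
  moreover have "(of_nat p * of_nat (card (X \<inter> H)) - of_nat N * of_nat (card H) :: complex)
      = of_real (real p * real (card (X \<inter> H)) - real N * real (card H))" by simp
  ultimately have "\<bar>real p * real (card (X \<inter> H)) - real N * real (card H)\<bar> \<le> real p * (sqrt (real p) * (1 + ln (real p)) - 1)"
    by (simp only: norm_of_real)
  moreover have "real (card (X \<inter> H)) - real N * real (card H) / real p
      = (real p * real (card (X \<inter> H)) - real N * real (card H)) / real p"
    using p0 by (simp add: field_simps)
  ultimately have "\<bar>real (card (X \<inter> H)) - real N * real (card H) / real p\<bar>
      \<le> real p * (sqrt (real p) * (1 + ln (real p)) - 1) / real p"
    using p0 by (simp only: abs_divide abs_of_nat) (intro divide_right_mono, auto)
  thus ?thesis using p0 unfolding X_def by simp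
qed

lemma prod_primes_dvd:
  fixes S :: "nat set"
  assumes "finite S" "\<forall>q\<in>S. prime q"
  shows "\<Prod>S dvd y \<longleftrightarrow> (\<forall>q\<in>S. q dvd y)"
  using assms
proof (induction S rule: finite_induct)
  case empty
  then show ?case by simp
next
  case (insert q S)
  have pq: "prime q" using insert by simp
  have "\<not> q dvd \<Prod>S"
  proof
    assume "q dvd \<Prod>S"
    then obtain x where "x \<in> S" "q dvd x"
      using prime_dvd_prod_iff[OF insert(1) pq, of id] by auto
    moreover have "prime x" using insert.prems \<open>x \<in> S\<close> by auto
    ultimately have "q = x" using primes_dvd_imp_eq[OF pq] by blast
    thus False using \<open>x \<in> S\<close> insert(2) by simp
  qed
  hence cop: "coprime q (\<Prod>S)" using prime_imp_coprime[OF pq] by simp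
  have "\<Prod>(insert q S) = q * \<Prod>S" using insert by simp
  moreover have "q * \<Prod>S dvd y \<longleftrightarrow> q dvd y \<and> \<Prod>S dvd y"
  proof
    assume "q * \<Prod>S dvd y"
    moreover have "q dvd q * \<Prod>S" "\<Prod>S dvd q * \<Prod>S" by simp_all
    ultimately show "q dvd y \<and> \<Prod>S dvd y" using dvd_trans by blast
  next
    assume "q dvd y \<and> \<Prod>S dvd y"
    thus "q * \<Prod>S dvd y" using divides_mult[OF _ _ cop] by blast
  qed
  ultimately show ?case using insert by auto
qed

lemma coprime_iff_pf:
  fixes y N :: nat
  assumes "N > 0"
  shows "coprime y N \<longleftrightarrow> (\<forall>q\<in>prime_factors N. \<not> q dvd y)"
proof
  assume c: "coprime y N"
  show "\<forall>q\<in>prime_factors N. \<not> q dvd y"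
  proof (intro ballI notI)
    fix q assume q: "q \<in> prime_factors N" "q dvd y"
    hence "q dvd N" "prime q" using assms by (auto simp: prime_factors_dvd)
    hence "is_unit q" using coprime_common_divisor[OF c q(2)] by blast
    thus False using \<open>prime q\<close> by simp
  qed
next
  assume h: "\<forall>q\<in>prime_factors N. \<not> q dvd y"
  show "coprime y N"
  proof (rule ccontr)
    assume "\<not> coprime y N"
    hence "gcd y N \<noteq> 1" by (simp only: coprime_iff_gcd_eq_1 not_False_eq_True)
    then obtain q where q: "prime q" "q dvd gcd y N" using prime_factor_nat[of "gcd y N"] by blast
    have "q dvd y" "q dvd N" using q(2) dvd_trans gcd_dvd1 gcd_dvd2 by blast+
    have "q \<in> prime_factors N" using q(1) \<open>q dvd N\<close> assms by (simp add: prime_factors_dvd)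
    thus False using h \<open>q dvd y\<close> by blast
  qed
qed

lemma IE:
  fixes y N :: nat
  assumes "N > 0"
  shows "(if coprime y N then 1 else 0 :: real)
       = (\<Sum>S\<in>Pow (prime_factors N). (-1) ^ card S * (if \<Prod>S dvd y then 1 else 0))"
proof -
  define P where "P = prime_factors N"
  have fP: "finite P" by (simp add: P_def)
  have primes: "\<forall>q\<in>P. prime q" by (auto simp: P_def)
  have "(\<Prod>q\<in>P. (1::real) - (if q dvd y then 1 else 0))
      = (\<Sum>X\<in>Pow P. (-1) ^ card X * (\<Prod>q\<in>X. (if q dvd y then 1 else 0)) * (\<Prod>q\<in>P-X. 1))"
    by (rule prod_diff_conv_sum[OF fP])
  also have "\<dots> = (\<Sum>S\<in>Pow P. (-1) ^ card S * (if \<Prod>S dvd y then 1 else 0))"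
  proof (rule sum.cong[OF refl])
    fix S assume S: "S \<in> Pow P"
    have fS: "finite S" using S fP finite_subset by auto
    have pS: "\<forall>q\<in>S. prime q" using S primes by auto
    have "(\<Prod>q\<in>S. (if q dvd y then 1 else 0::real)) = (if \<forall>q\<in>S. q dvd y then 1 else 0)"
      using fS by (induction S rule: finite_induct) auto
    thus "(-1) ^ card S * (\<Prod>q\<in>S. (if q dvd y then 1 else 0)) * (\<Prod>q\<in>P-S. 1)
        = (-1) ^ card S * (if \<Prod>S dvd y then 1 else (0::real))"
      using prod_primes_dvd[OF fS pS, of y] by simp
  qed
  also have "(\<Prod>q\<in>P. (1::real) - (if q dvd y then 1 else 0)) = (if \<forall>q\<in>P. \<not> q dvd y then 1 else 0)"
    using fP by (induction P rule: finite_induct) auto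
  finally show ?thesis using coprime_iff_pf[OF assms, of y] by (simp add: P_def)
qed

lemma primroot_facts:
  fixes p :: nat
  assumes "prime p"
  obtains r where "bij_betw (\<lambda>i. r ^ i mod p) {..<p-1} {1..<p}"
    "\<And>i. [r ^ i = 1] (mod p) \<longleftrightarrow> (p - 1) dvd i" "coprime p r"
proof -
  obtain r where r: "residue_primroot p r" using prime_primitive_root_exists[OF prime_gt_1_nat[OF assms] assms] by blast
  have p1: "p > 1" using prime_gt_1_nat[OF assms] .
  have tot: "totient p = p - 1" using totient_prime[OF assms] .
  have ord: "ord p r = p - 1" using r tot by (simp add: residue_primroot_def)
  have cop: "coprime p r" using r by (simp add: residue_primroot_def)
  have "bij_betw (\<lambda>i. r ^ i mod p) {..<totient p} (totatives p)"
    by (rule residue_primroot_is_generator[OF p1 r])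
  moreover have "{0<..<p} = {1..<p}" by (simp add: greaterThanLessThan_eq atLeastLessThan_def atLeast_def greaterThan_def Suc_le_eq)
  hence "totatives p = {1..<p}" using totatives_prime[OF assms] by simp
  ultimately have b: "bij_betw (\<lambda>i. r ^ i mod p) {..<p-1} {1..<p}" using tot by simp
  have o: "[r ^ i = 1] (mod p) \<longleftrightarrow> (p - 1) dvd i" for i
    using ord_divides'[of r i p] unfolding ord by simp
  show ?thesis by (rule that[OF b o cop])
qed

definition Hs :: "nat \<Rightarrow> nat \<Rightarrow> nat set" where
  "Hs p k = {x \<in> {1..<p}. [x ^ k = 1] (mod p)}"

lemma Hs_subgrp:
  assumes "prime p"
  shows "subgrp p (Hs p k)"
  unfolding subgrp_def
proof (intro conjI ballI)
  show "Hs p k \<subseteq> {1..<p}" by (auto simp: Hs_def)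
  show "1 \<in> Hs p k" using prime_gt_1_nat[OF assms] by (simp add: Hs_def)
  fix x y assume x: "x \<in> Hs p k" and y: "y \<in> Hs p k"
  have xr: "0 < x" "x < p" "[x ^ k = 1] (mod p)" using x by (auto simp: Hs_def)
  have yr: "0 < y" "y < p" "[y ^ k = 1] (mod p)" using y by (auto simp: Hs_def)
  have nx: "\<not> p dvd x" using xr by (auto dest: dvd_imp_le)
  have ny: "\<not> p dvd y" using yr by (auto dest: dvd_imp_le)
  have "\<not> p dvd x * y" using nx ny prime_dvd_mult_iff[OF assms] by simp
  hence z0: "(x * y) mod p \<noteq> 0" by (simp add: dvd_eq_mod_eq_0)
  have zp: "(x * y) mod p < p" using prime_gt_0_nat[OF assms] by simp
  have "[((x * y) mod p) ^ k = (x * y) ^ k] (mod p)"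
    by (rule cong_pow) (simp add: cong_def)
  also have "(x * y) ^ k = x ^ k * y ^ k" by (simp add: power_mult_distrib)
  also have "[x ^ k * y ^ k = 1 * 1] (mod p)" by (rule cong_mult[OF xr(3) yr(3)])
  finally have "[((x * y) mod p) ^ k = 1] (mod p)" by simp
  thus "(x * y) mod p \<in> Hs p k" using z0 zp by (simp add: Hs_def)
qed

lemma card_multiples:
  fixes m k :: nat
  assumes "m > 0"
  shows "card {i \<in> {..<m * k}. m dvd i} = k"
proof -
  have "{i \<in> {..<m * k}. m dvd i} = (\<lambda>j. m * j) ` {..<k}"
  proof (intro equalityI subsetI)
    fix i assume "i \<in> {i \<in> {..<m * k}. m dvd i}"
    then obtain j where "i = m * j" "m * j < m * k" by auto
    thus "i \<in> (\<lambda>j. m * j) ` {..<k}" by auto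
  qed (use assms in auto)
  moreover have "inj_on (\<lambda>j. m * j) {..<k}" using assms by (auto simp: inj_on_def)
  ultimately show ?thesis by (simp add: card_image)
qed

lemma Hs_card:
  assumes "prime p" "k dvd (p - 1)"
  shows "card (Hs p k) = k"
proof -
  obtain r where b: "bij_betw (\<lambda>i. r ^ i mod p) {..<p-1} {1..<p}"
    and o: "\<And>i. [r ^ i = 1] (mod p) \<longleftrightarrow> (p - 1) dvd i" using primroot_facts[OF assms(1)] by blast
  define n where "n = p - 1"
  have n0: "n > 0" using prime_gt_1_nat[OF assms(1)] by (simp add: n_def)
  obtain m where m: "n = k * m" using assms(2) by (auto simp: n_def)
  have k0: "k > 0" and m0: "m > 0" using n0 m by auto
  define f where "f = (\<lambda>i. r ^ i mod p)"
  have inj: "inj_on f {..<n}" using b by (simp add: bij_betw_def f_def n_def)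
  have img: "f ` {..<n} = {1..<p}" using b by (simp add: bij_betw_def f_def n_def)
  have key: "[f i ^ k = 1] (mod p) \<longleftrightarrow> m dvd i" for i
  proof -
    have "[f i ^ k = (r ^ i) ^ k] (mod p)" unfolding f_def by (rule cong_pow) (simp add: cong_def)
    hence c: "f i ^ k mod p = r ^ (i * k) mod p" by (simp add: cong_def power_mult)
    hence "[f i ^ k = 1] (mod p) \<longleftrightarrow> [r ^ (i * k) = 1] (mod p)"
      unfolding cong_def by simp
    also have "\<dots> \<longleftrightarrow> n dvd i * k" using o by (simp add: n_def)
    also have "\<dots> \<longleftrightarrow> m dvd i" using m k0 by (simp add: mult.commute)
    finally show ?thesis .
  qed
  have "Hs p k = f ` {i \<in> {..<n}. m dvd i}"
  proof (intro equalityI subsetI)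
    fix x assume x: "x \<in> Hs p k"
    hence "x \<in> f ` {..<n}" using img by (auto simp: Hs_def)
    then obtain i where i: "i < n" "x = f i" by auto
    hence "m dvd i" using key x by (simp add: Hs_def)
    thus "x \<in> f ` {i \<in> {..<n}. m dvd i}" using i by auto
  next
    fix x assume "x \<in> f ` {i \<in> {..<n}. m dvd i}"
    then obtain i where i: "i < n" "m dvd i" "x = f i" by auto
    have "x \<in> {1..<p}" using img i by auto
    thus "x \<in> Hs p k" using key i by (simp add: Hs_def)
  qed
  moreover have "inj_on f {i \<in> {..<n}. m dvd i}" by (rule inj_on_subset[OF inj]) auto
  ultimately have "card (Hs p k) = card {i \<in> {..<n}. m dvd i}"
    by (simp add: card_image)
  also have "\<dots> = k" using card_multiples[OF m0, of k] m by (simp add: mult.commute)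
  finally show ?thesis .
qed

lemma char_G:
  fixes p h :: nat
  assumes p: "prime p" and h: "h \<in> {1..<p}"
  shows "(\<exists>g\<in>{1..p-1}. [g ^ h = h] (mod p)) \<longleftrightarrow> h \<in> Hs p ((p - 1) div gcd h (p - 1))"
proof -
  define n where "n = p - 1"
  define d where "d = gcd h n"
  define k where "k = n div d"
  have p1: "p > 1" using prime_gt_1_nat[OF p] .
  have n0: "n > 0" using p1 by (simp add: n_def)
  have h0: "h > 0" using h by simp
  have d0: "d > 0" using h0 by (simp add: d_def)
  have dh: "d dvd h" and dn: "d dvd n" by (simp_all add: d_def)
  have nk: "n = d * k" using dn by (simp add: k_def)
  have k0: "k > 0" using nk n0 by (cases k) auto
  obtain h' where hh: "h = d * h'" using dh by blast
  have hk: "h * k = n * h'" using nk hh by (simp add: mult_ac)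
  have k_eq: "(p - 1) div gcd h (p - 1) = k" by (simp add: k_def d_def n_def)
  show ?thesis unfolding k_eq
  proof
    assume "\<exists>g\<in>{1..p-1}. [g ^ h = h] (mod p)"
    then obtain g where g: "g \<in> {1..p-1}" "[g ^ h = h] (mod p)" by blast
    have "\<not> p dvd g" using g(1) p1 by (auto dest: dvd_imp_le)
    hence fg: "[g ^ n = 1] (mod p)" using fermat_theorem[OF p] by (simp add: n_def)
    have "[h ^ k = (g ^ h) ^ k] (mod p)" by (rule cong_pow) (rule cong_sym[OF g(2)])
    also have "(g ^ h) ^ k = (g ^ n) ^ h'" by (simp add: hk flip: power_mult)
    also have "[(g ^ n) ^ h' = 1 ^ h'] (mod p)" by (rule cong_pow[OF fg])
    finally have "[h ^ k = 1] (mod p)" by simp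
    thus "h \<in> Hs p k" using h by (simp add: Hs_def)
  next
    assume hs: "h \<in> Hs p k"
    hence hk1: "[h ^ k = 1] (mod p)" by (simp add: Hs_def)
    obtain r where b: "bij_betw (\<lambda>i. r ^ i mod p) {..<p-1} {1..<p}"
      and o: "\<And>i. [r ^ i = 1] (mod p) \<longleftrightarrow> (p - 1) dvd i" and cop: "coprime p r"
      using primroot_facts[OF p] by blast
    have "h \<in> (\<lambda>i. r ^ i mod p) ` {..<n}" using b h by (simp add: bij_betw_def n_def)
    then obtain b where bb: "b < n" "h = r ^ b mod p" by blast
    have hb: "[r ^ b = h] (mod p)" using bb by (simp add: cong_def)
    have "[r ^ (b * k) = (r ^ b) ^ k] (mod p)" by (simp add: power_mult)
    also have "[(r ^ b) ^ k = h ^ k] (mod p)" by (rule cong_pow[OF hb])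
    also note hk1
    finally have "n dvd b * k" using o by (simp add: n_def)
    hence "d * k dvd b * k" using nk by simp
    hence "d dvd b" using k0 by simp
    then obtain t where bt: "b = d * t" by blast
    have "\<exists>x y. h * x = n * y + gcd h n" using bezout_nat[of h n] h0 by simp
    then obtain x y where xy: "h * x = n * y + d" unfolding d_def by blast
    have "h * (x * t) = (h * x) * t" by (simp add: mult.assoc)
    also have "\<dots> = (n * y + d) * t" using xy by simp
    also have "\<dots> = n * (y * t) + b" using bt by (simp add: algebra_simps)
    finally have e: "h * (x * t) = n * (y * t) + b" .
    define g where "g = r ^ (x * t) mod p"
    have "\<not> p dvd r ^ (x * t)"
    proof
      assume "p dvd r ^ (x * t)"
      hence "p dvd r" by (rule prime_dvd_power[OF p])
      hence "is_unit p" using coprime_common_divisor[OF cop dvd_refl] by blast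
      thus False using p by simp
    qed
    hence g0: "g \<noteq> 0" by (simp add: g_def dvd_eq_mod_eq_0)
    have gp: "g < p" using p1 by (simp add: g_def)
    have "[g ^ h = (r ^ (x * t)) ^ h] (mod p)" unfolding g_def by (rule cong_pow) (simp add: cong_def)
    also have "(r ^ (x * t)) ^ h = (r ^ n) ^ (y * t) * r ^ b"
    proof -
      have "(r ^ (x * t)) ^ h = r ^ ((x * t) * h)" by (simp only: power_mult)
      also have "\<dots> = r ^ (h * (x * t))" by (simp only: mult.commute[of "x * t" h])
      also have "\<dots> = r ^ (n * (y * t)) * r ^ b" by (simp only: e power_add)
      also have "r ^ (n * (y * t)) = (r ^ n) ^ (y * t)" by (simp only: power_mult)
      finally show ?thesis .
    qed
    also have "[(r ^ n) ^ (y * t) * r ^ b = 1 ^ (y * t) * h] (mod p)"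
    proof (rule cong_mult)
      have "[r ^ n = 1] (mod p)" using o[of n] by (simp add: n_def)
      thus "[(r ^ n) ^ (y * t) = 1 ^ (y * t)] (mod p)" by (rule cong_pow)
      show "[r ^ b = h] (mod p)" by (rule hb)
    qed
    finally have "[g ^ h = h] (mod p)" by simp
    moreover have "g \<in> {1..p-1}" using g0 gp by auto
    ultimately show "\<exists>g\<in>{1..p-1}. [g ^ h = h] (mod p)" by blast
  qed
qed

lemma IE_gcd:
  fixes n d h :: nat
  assumes n0: "n > 0" and dn: "d dvd n"
  shows "(if gcd h n = d then 1 else 0 :: real)
       = (\<Sum>S\<in>Pow (prime_factors (n div d)). (-1) ^ card S * (if d * \<Prod>S dvd h then 1 else 0))"
proof (cases "d dvd h")
  case False
  have "gcd h n \<noteq> d" using False by auto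
  moreover have "\<not> d * \<Prod>S dvd h" for S using False dvd_mult_left by blast
  ultimately show ?thesis by simp
next
  case True
  have d0: "d > 0" using dn n0 by (cases d) auto
  obtain y where y: "h = d * y" using True by blast
  obtain N where N: "n = d * N" using dn by blast
  have N0: "N > 0" using N n0 by (cases N) auto
  have Nd: "n div d = N" using N d0 by simp
  have "gcd h n = d * gcd y N" using y N by (simp add: gcd_mult_distrib_nat)
  hence "gcd h n = d \<longleftrightarrow> d * gcd y N = d * 1" by simp
  also have "\<dots> \<longleftrightarrow> gcd y N = 1" using d0 by (simp only: mult_cancel_left) simp
  also have "\<dots> \<longleftrightarrow> coprime y N" by (rule coprime_iff_gcd_eq_1[symmetric])
  finally have g: "gcd h n = d \<longleftrightarrow> coprime y N" .
  have dv: "d * \<Prod>S dvd h \<longleftrightarrow> \<Prod>S dvd y" for S using y d0 by simp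
  show ?thesis unfolding g dv Nd using IE[OF N0, of y] by simp
qed

lemma mult_filter:
  fixes D n :: nat
  assumes "D > 0" "D dvd n"
  shows "{h \<in> {1..n}. D dvd h \<and> h \<in> H} = (\<lambda>y. D * y) ` {1..n div D} \<inter> H"
proof (intro equalityI subsetI)
  fix h assume h: "h \<in> {h \<in> {1..n}. D dvd h \<and> h \<in> H}"
  then obtain y where y: "h = D * y" by blast
  have "y \<ge> 1" using h y by (cases y) auto
  moreover have "D * y \<le> D * (n div D)" using h y assms by simp
  hence "y \<le> n div D" using assms(1) by simp
  ultimately show "h \<in> (\<lambda>y. D * y) ` {1..n div D} \<inter> H" using h y by auto
next
  fix h assume h: "h \<in> (\<lambda>y. D * y) ` {1..n div D} \<inter> H"
  hence hH: "h \<in> H" and hi: "h \<in> (\<lambda>y. D * y) ` {1..n div D}" by auto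
  from hi obtain y0 where y0: "y0 \<in> {1..n div D}" "h = D * y0" by (rule imageE)
  have y: "h = D * y0" "1 \<le> y0" "y0 \<le> n div D" "h \<in> H" using y0 hH by auto
  have "D * y0 \<le> D * (n div D)" using y(3) by simp
  also have "\<dots> = n" using assms by simp
  finally have "h \<le> n" using y by simp
  moreover have "h \<ge> 1" using y assms(1) by simp
  ultimately show "h \<in> {h \<in> {1..n}. D dvd h \<and> h \<in> H}" using y by auto
qed

lemma card_mults:
  fixes D n :: nat
  assumes "D > 0" "D dvd n"
  shows "card {h \<in> {1..n}. D dvd h} = n div D"
proof -
  have "{h \<in> {1..n}. D dvd h} = {h \<in> {1..n}. D dvd h \<and> h \<in> UNIV}" by simp
  also have "\<dots> = (\<lambda>y. D * y) ` {1..n div D}" using mult_filter[OF assms, of UNIV] by simp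
  finally have e: "{h \<in> {1..n}. D dvd h} = (\<lambda>y. D * y) ` {1..n div D}" .
  have "inj_on (\<lambda>y. D * y) {1..n div D}" using assms(1) by (auto simp: inj_on_def)
  thus ?thesis unfolding e by (simp add: card_image)
qed

lemma card_as_sum:
  fixes A :: "'a set"
  assumes "finite A"
  shows "real (card {x \<in> A. P x}) = (\<Sum>x\<in>A. if P x then 1 else 0)"
proof -
  have "(\<Sum>x\<in>A. if P x then 1 else (0::real)) = (\<Sum>x\<in>{x \<in> A. P x}. 1)"
    using sum.inter_filter[OF assms, of "\<lambda>_. (1::real)" P] by simp
  thus ?thesis by simp
qed

lemma totient_IE:
  fixes N :: nat
  assumes N0: "N > 0"
  shows "real (totient N) = (\<Sum>S\<in>Pow (prime_factors N). (-1) ^ card S * real (N div \<Prod>S))"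
proof -
  have t: "totient N = card {y \<in> {1..N}. coprime y N}"
    unfolding totient_def totatives_def by (rule arg_cong[where f=card]) auto
  have "real (totient N) = (\<Sum>y\<in>{1..N}. if coprime y N then 1 else 0)"
    unfolding t by (rule card_as_sum) simp
  also have "\<dots> = (\<Sum>y\<in>{1..N}. \<Sum>S\<in>Pow (prime_factors N). (-1) ^ card S * (if \<Prod>S dvd y then 1 else 0))"
    by (intro sum.cong refl IE[OF N0])
  also have "\<dots> = (\<Sum>S\<in>Pow (prime_factors N). \<Sum>y\<in>{1..N}. (-1) ^ card S * (if \<Prod>S dvd y then 1 else 0))"
    by (rule sum.swap)
  also have "\<dots> = (\<Sum>S\<in>Pow (prime_factors N). (-1) ^ card S * real (N div \<Prod>S))"
  proof (rule sum.cong[OF refl])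
    fix S assume S: "S \<in> Pow (prime_factors N)"
    have fS: "finite S" using S finite_subset by blast
    have pS: "\<forall>q\<in>S. prime q" using S by auto
    have "\<Prod>S dvd N" using prod_primes_dvd[OF fS pS, of N] S N0 by (auto simp: prime_factors_dvd)
    moreover have "\<Prod>S > 0" using pS fS by (simp add: prime_gt_0_nat prod_pos)
    ultimately have c: "card {y \<in> {1..N}. \<Prod>S dvd y} = N div \<Prod>S" by (intro card_mults)
    have "(\<Sum>y\<in>{1..N}. (-1) ^ card S * (if \<Prod>S dvd y then 1 else 0)) = (-1) ^ card S * (\<Sum>y\<in>{1..N}. (if \<Prod>S dvd y then 1 else (0::real)))"
      by (simp add: sum_distrib_left)
    also have "(\<Sum>y\<in>{1..N}. (if \<Prod>S dvd y then 1 else (0::real))) = real (N div \<Prod>S)"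
      using card_as_sum[of "{1..N}" "\<lambda>y. \<Prod>S dvd y"] c by simp
    finally show "(\<Sum>y\<in>{1..N}. (-1) ^ card S * (if \<Prod>S dvd y then 1 else 0)) = (-1) ^ card S * real (N div \<Prod>S)" .
  qed
  finally show ?thesis .
qed

lemma pow_pf_card:
  fixes N n :: nat
  assumes "N > 0" "N dvd n" "n > 0"
  shows "card (Pow (prime_factors N)) \<le> num_divisors n"
proof -
  have inj: "inj_on Prod (Pow (prime_factors N))"
  proof (rule inj_onI)
    fix S T assume S: "S \<in> Pow (prime_factors N)" and T: "T \<in> Pow (prime_factors N)" and e: "\<Prod>S = \<Prod>T"
    have fS: "finite S" and fT: "finite T" using S T finite_subset by auto
    have pS: "\<forall>q\<in>S. prime q" and pT: "\<forall>q\<in>T. prime q" using S T by auto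
    have sub: "A \<subseteq> B" if fA: "finite A" "finite B" "\<forall>q\<in>A. prime q" "\<forall>q\<in>B. prime q" "\<Prod>A = \<Prod>B"
      for A B :: "nat set"
    proof
      fix q assume q: "q \<in> A"
      have "q dvd \<Prod>A" using dvd_prodI[OF fA(1) q, of "\<lambda>x. x"] by simp
      hence "q dvd \<Prod>B" using fA(5) by simp
      then obtain x where x: "x \<in> B" "q dvd x"
        using prime_dvd_prod_iff[OF fA(2), of q id] q fA(3) by auto
      have "prime x" using x fA(4) by auto
      hence "q = x" using primes_dvd_imp_eq[of q x] q fA(3) x(2) by blast
      thus "q \<in> B" using x by simp
    qed
    show "S = T" using sub[OF fS fT pS pT e] sub[OF fT fS pT pS e[symmetric]] by (rule equalityI)
  qed
  have sub: "Prod ` Pow (prime_factors N) \<subseteq> {d. d dvd n}"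
  proof
    fix m assume "m \<in> Prod ` Pow (prime_factors N)"
    then obtain S where S: "S \<in> Pow (prime_factors N)" "m = \<Prod>S" by blast
    have fS: "finite S" using S finite_subset by blast
    have pS: "\<forall>q\<in>S. prime q" using S by auto
    have "\<forall>q\<in>S. q dvd N" using S assms(1) by (auto simp: prime_factors_dvd)
    hence "\<Prod>S dvd N" using prod_primes_dvd[OF fS pS, of N] by simp
    thus "m \<in> {d. d dvd n}" using S assms(2) dvd_trans by auto
  qed
  have fin: "finite {d. d dvd n}" using assms(3) by simp
  have "card (Pow (prime_factors N)) = card (Prod ` Pow (prime_factors N))"
    using inj by (simp add: card_image)
  also have "\<dots> \<le> card {d. d dvd n}" by (rule card_mono[OF fin sub])
  finally show ?thesis by (simp add: num_divisors_def)
qed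

lemma prodS_facts:
  fixes N :: nat
  assumes "N > 0" "S \<in> Pow (prime_factors N)"
  shows "\<Prod>S dvd N" "\<Prod>S > 0"
proof -
  have fS: "finite S" using assms(2) finite_subset by blast
  have pS: "\<forall>q\<in>S. prime q" using assms(2) by auto
  have "\<forall>q\<in>S. q dvd N" using assms by (auto simp: prime_factors_dvd)
  thus "\<Prod>S dvd N" using prod_primes_dvd[OF fS pS, of N] by simp
  show "\<Prod>S > 0" using pS fS by (simp add: prime_gt_0_nat prod_pos)
qed

lemma cnt_formula:
  fixes n d :: nat and H :: "nat set"
  assumes n0: "n > 0" and dn: "d dvd n"
  shows "(\<Sum>h\<in>{1..n}. if gcd h n = d \<and> h \<in> H then 1 else 0 :: real)
    = (\<Sum>S\<in>Pow (prime_factors (n div d)). (-1) ^ card S * real (card ((\<lambda>y. (d * \<Prod>S) * y) ` {1..n div (d * \<Prod>S)} \<inter> H)))"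
proof -
  have d0: "d > 0" using dn n0 by (cases d) auto
  have Nd0: "n div d > 0" using dn n0 d0 by (metis dvd_div_eq_0_iff gr0I not_gr0)
  have "(\<Sum>h\<in>{1..n}. if gcd h n = d \<and> h \<in> H then 1 else 0 :: real)
      = (\<Sum>h\<in>{1..n}. (if h \<in> H then 1 else 0) * (if gcd h n = d then 1 else 0 :: real))"
    by (intro sum.cong refl) simp
  also have "\<dots> = (\<Sum>h\<in>{1..n}. (if h \<in> H then 1 else 0) *
      (\<Sum>S\<in>Pow (prime_factors (n div d)). (-1) ^ card S * (if d * \<Prod>S dvd h then 1 else 0 :: real)))"
    by (intro sum.cong refl arg_cong2[where f="(*)"] IE_gcd[OF n0 dn])
  also have "\<dots> = (\<Sum>h\<in>{1..n}. \<Sum>S\<in>Pow (prime_factors (n div d)).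
      (-1) ^ card S * (if d * \<Prod>S dvd h \<and> h \<in> H then 1 else 0 :: real))"
    by (intro sum.cong refl) (simp add: sum_distrib_left)
  also have "\<dots> = (\<Sum>S\<in>Pow (prime_factors (n div d)). \<Sum>h\<in>{1..n}.
      (-1) ^ card S * (if d * \<Prod>S dvd h \<and> h \<in> H then 1 else 0 :: real))"
    by (rule sum.swap)
  also have "\<dots> = (\<Sum>S\<in>Pow (prime_factors (n div d)). (-1) ^ card S * real (card ((\<lambda>y. (d * \<Prod>S) * y) ` {1..n div (d * \<Prod>S)} \<inter> H)))"
  proof (rule sum.cong[OF refl])
    fix S assume S: "S \<in> Pow (prime_factors (n div d))"
    have "\<Prod>S dvd n div d" "\<Prod>S > 0" using prodS_facts[OF Nd0 S] by auto
    hence D: "d * \<Prod>S > 0" "d * \<Prod>S dvd n" using d0 dn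
      by (auto simp: dvd_div_iff_mult mult.commute)
    have "(\<Sum>h\<in>{1..n}. (-1) ^ card S * (if d * \<Prod>S dvd h \<and> h \<in> H then 1 else 0 :: real))
        = (-1) ^ card S * (\<Sum>h\<in>{1..n}. (if d * \<Prod>S dvd h \<and> h \<in> H then 1 else 0 :: real))"
      by (simp add: sum_distrib_left)
    also have "(\<Sum>h\<in>{1..n}. (if d * \<Prod>S dvd h \<and> h \<in> H then 1 else 0 :: real))
        = real (card {h \<in> {1..n}. d * \<Prod>S dvd h \<and> h \<in> H})"
      by (rule card_as_sum[symmetric]) simp
    also have "{h \<in> {1..n}. d * \<Prod>S dvd h \<and> h \<in> H} = (\<lambda>y. (d * \<Prod>S) * y) ` {1..n div (d * \<Prod>S)} \<inter> H"
      by (rule mult_filter[OF D])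
    finally show "(\<Sum>h\<in>{1..n}. (-1) ^ card S * (if d * \<Prod>S dvd h \<and> h \<in> H then 1 else 0 :: real))
        = (-1) ^ card S * real (card ((\<lambda>y. (d * \<Prod>S) * y) ` {1..n div (d * \<Prod>S)} \<inter> H))" .
  qed
  finally show ?thesis .
qed


lemma odd_prime_ge3:
  fixes p :: nat
  assumes "prime p" "odd p"
  shows "p \<ge> 3"
proof -
  have "p \<ge> 2" using prime_ge_2_nat[OF assms(1)] .
  moreover have "p \<noteq> 2" using assms(2) by auto
  ultimately show "p \<ge> 3" by linarith
qed

lemma per_S_err:
  fixes p n d :: nat
  assumes p: "prime p" "odd p" and n: "n = p - 1" and dn: "d dvd n"
    and S: "S \<in> Pow (prime_factors (n div d))"
  shows "\<bar>real (card ((\<lambda>y. (d * \<Prod>S) * y) ` {1..n div (d * \<Prod>S)} \<inter> Hs p (n div d)))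
          - real ((n div d) div \<Prod>S) / real d\<bar> \<le> sqrt (real p) * (1 + ln (real p))"
proof -
  have p3: "p \<ge> 3" using odd_prime_ge3[OF p] .
  have n0: "n > 0" using p3 n by simp
  have d0: "d > 0" using dn n0 by (cases d) auto
  have Nd0: "n div d > 0" using dn n0 d0 by (metis dvd_div_eq_0_iff gr0I not_gr0)
  have "\<Prod>S dvd n div d" "\<Prod>S > 0" using prodS_facts[OF Nd0 S] by auto
  hence D: "d * \<Prod>S > 0" "d * \<Prod>S dvd n" using d0 dn
    by (auto simp: dvd_div_iff_mult mult.commute)
  define D' where "D' = d * \<Prod>S"
  define M where "M = n div D'"
  have M_eq: "(n div d) div \<Prod>S = M" by (simp add: M_def D'_def div_mult2_eq)
  have DM: "D' * M = n" using D by (simp add: M_def D'_def)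
  have DMp: "D' * M < p" using DM n p3 by simp
  have Dp: "D' < p"
  proof -
    have "D' \<le> n" using D n0 by (simp add: D'_def dvd_imp_le)
    thus ?thesis using n p3 by simp
  qed
  have Mn: "M \<le> n" using DM D by (metis D'_def dvd_imp_le dvd_triv_right n0)
  have sg: "subgrp p (Hs p (n div d))" by (rule Hs_subgrp[OF p(1)])
  obtain c where c: "n = d * c" using dn by blast
  have "n div d = c" using c d0 by simp
  hence ndvd: "n div d dvd p - 1" using c n by simp
  have cH: "card (Hs p (n div d)) = n div d"
    by (rule Hs_card[OF p(1) ndvd])
  have pc: "\<bar>real (card ((\<lambda>y. D' * y) ` {1..M} \<inter> Hs p (n div d))) - real M * real (n div d) / real p\<bar>
      \<le> sqrt (real p) * (1 + ln (real p)) - 1"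
    using prog_count[OF p(1) p(2) sg D(1)[folded D'_def] DMp Dp] cH by simp
  have rd: "real (n div d) = real n / real d" using dn by (simp add: real_of_nat_div)
  have rn: "real n = real p - 1" using n p3 by simp
  have "real M * real (n div d) / real p - real M / real d = - (real M / (real d * real p))"
    using d0 p3 unfolding rd rn by (simp add: field_simps)
  moreover have "real M / (real d * real p) \<le> 1"
  proof -
    have "real M \<le> real p" using Mn n p3 by simp
    also have "\<dots> = 1 * real p" by simp
    also have "\<dots> \<le> real d * real p" using d0 by (intro mult_right_mono) auto
    finally show ?thesis using d0 p3 by simp
  qed
  moreover have "real M / (real d * real p) \<ge> 0" by simp
  ultimately have e2: "\<bar>real M * real (n div d) / real p - real M / real d\<bar> \<le> 1" by simp
  have "\<bar>real (card ((\<lambda>y. D' * y) ` {1..M} \<inter> Hs p (n div d))) - real M / real d\<bar>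
      \<le> sqrt (real p) * (1 + ln (real p))"
    using pc e2 by linarith
  thus ?thesis unfolding M_eq by (simp add: D'_def M_def)
qed


lemma per_d_err:
  fixes p n d :: nat
  assumes p: "prime p" "odd p" and n: "n = p - 1" and dn: "d dvd n"
  shows "\<bar>(\<Sum>h\<in>{1..n}. if gcd h n = d \<and> h \<in> Hs p (n div d) then 1 else 0 :: real)
          - (1 / real d) * real (totient (n div d))\<bar>
         \<le> real (num_divisors n) * (sqrt (real p) * (1 + ln (real p)))"
proof -
  have p3: "p \<ge> 3" using odd_prime_ge3[OF p] .
  have n0: "n > 0" using p3 n by simp
  have d0: "d > 0" using dn n0 by (cases d) auto
  have Nd0: "n div d > 0" using dn n0 d0 by (metis dvd_div_eq_0_iff gr0I not_gr0)
  define P where "P = Pow (prime_factors (n div d))"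
  define E where "E = sqrt (real p) * (1 + ln (real p))"
  have E0: "E \<ge> 0" using p3 by (simp add: E_def)
  define C where "C S = real (card ((\<lambda>y. (d * \<Prod>S) * y) ` {1..n div (d * \<Prod>S)} \<inter> Hs p (n div d)))" for S
  have finP: "finite P" by (simp add: P_def)
  have "(\<Sum>h\<in>{1..n}. if gcd h n = d \<and> h \<in> Hs p (n div d) then 1 else 0 :: real)
      = (\<Sum>S\<in>P. (-1) ^ card S * C S)"
    unfolding P_def C_def by (rule cnt_formula[OF n0 dn])
  moreover have "(1 / real d) * real (totient (n div d)) = (\<Sum>S\<in>P. (-1) ^ card S * (real ((n div d) div \<Prod>S) / real d))"
    unfolding P_def totient_IE[OF Nd0] by (simp add: sum_distrib_left)
  ultimately have "(\<Sum>h\<in>{1..n}. if gcd h n = d \<and> h \<in> Hs p (n div d) then 1 else 0 :: real)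
          - (1 / real d) * real (totient (n div d))
       = (\<Sum>S\<in>P. (-1) ^ card S * (C S - real ((n div d) div \<Prod>S) / real d))"
    by (simp add: sum_subtractf right_diff_distrib)
  also have "\<bar>\<dots>\<bar> \<le> (\<Sum>S\<in>P. \<bar>(-1) ^ card S * (C S - real ((n div d) div \<Prod>S) / real d)\<bar>)"
    by (rule sum_abs)
  also have "\<dots> \<le> (\<Sum>S\<in>P. E)"
  proof (rule sum_mono)
    fix S assume S: "S \<in> P"
    have "\<bar>(-1) ^ card S * (C S - real ((n div d) div \<Prod>S) / real d)\<bar> = \<bar>C S - real ((n div d) div \<Prod>S) / real d\<bar>"
      by (simp add: abs_mult)
    also have "\<dots> \<le> E" unfolding C_def E_def by (rule per_S_err[OF p n dn S[unfolded P_def]])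
    finally show "\<bar>(-1) ^ card S * (C S - real ((n div d) div \<Prod>S) / real d)\<bar> \<le> E" .
  qed
  also have "\<dots> = real (card P) * E" by simp
  also have "\<dots> \<le> real (num_divisors n) * E"
  proof (rule mult_right_mono[OF _ E0])
    have "n div d dvd n" using dn d0 by (metis dvd_div_mult_self dvd_triv_left)
    hence "card P \<le> num_divisors n" unfolding P_def by (rule pow_pf_card[OF Nd0 _ n0])
    thus "real (card P) \<le> real (num_divisors n)" by simp
  qed
  finally show ?thesis by (simp add: E_def)
qed

lemma main_bound:
  fixes p n :: nat
  assumes p: "prime p" "odd p" and n: "n = p - 1"
  shows "\<bar>real (G_any_any p) - (\<Sum>e | e dvd n. (1 / real e) * real (totient (n div e)))\<bar>
           \<le> real (num_divisors n) ^ 2 * sqrt (real p) * (1 + ln (real p))"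
proof -
  have p3: "p \<ge> 3" using odd_prime_ge3[OF p] .
  have n0: "n > 0" using p3 n by simp
  define Dv where "Dv = {d. d dvd n}"
  have finD: "finite Dv" using n0 by (simp add: Dv_def)
  define E where "E = sqrt (real p) * (1 + ln (real p))"
  define cnt where "cnt d = (\<Sum>h\<in>{1..n}. if gcd h n = d \<and> h \<in> Hs p (n div d) then 1 else 0 :: real)" for d
  have "G_any_any p = card {h \<in> {1..n}. \<exists>g \<in> {1..n}. [g ^ h = h] (mod p)}"
    by (simp add: G_any_any_def n)
  also have "{h \<in> {1..n}. \<exists>g \<in> {1..n}. [g ^ h = h] (mod p)} = {h \<in> {1..n}. h \<in> Hs p (n div gcd h n)}"
  proof (rule Collect_cong)
    fix h
    show "(h \<in> {1..n} \<and> (\<exists>g \<in> {1..n}. [g ^ h = h] (mod p))) \<longleftrightarrow> (h \<in> {1..n} \<and> h \<in> Hs p (n div gcd h n))"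
    proof (cases "h \<in> {1..n}")
      case True
      hence "h \<in> {1..<p}" using n p3 by auto
      from char_G[OF p(1) this] show ?thesis using True by (simp add: n)
    next
      case False
      thus ?thesis by blast
    qed
  qed
  finally have "real (G_any_any p) = (\<Sum>h\<in>{1..n}. if h \<in> Hs p (n div gcd h n) then 1 else 0)"
    using card_as_sum[of "{1..n}" "\<lambda>h. h \<in> Hs p (n div gcd h n)"] by simp
  also have "\<dots> = (\<Sum>h\<in>{1..n}. \<Sum>d\<in>Dv. if gcd h n = d \<and> h \<in> Hs p (n div d) then 1 else 0)"
  proof (rule sum.cong[OF refl])
    fix h
    have gD: "gcd h n \<in> Dv" by (simp add: Dv_def)
    have "(\<Sum>d\<in>Dv. if gcd h n = d \<and> h \<in> Hs p (n div d) then 1 else 0 :: real)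
        = (\<Sum>d\<in>Dv. if gcd h n = d then (if h \<in> Hs p (n div d) then 1 else 0) else 0)"
      by (intro sum.cong refl) simp
    also have "\<dots> = (if h \<in> Hs p (n div gcd h n) then 1 else 0)"
      using sum.delta'[OF finD, of "gcd h n" "\<lambda>d. if h \<in> Hs p (n div d) then 1 else (0::real)"] gD by simp
    finally show "(if h \<in> Hs p (n div gcd h n) then 1 else 0) = (\<Sum>d\<in>Dv. if gcd h n = d \<and> h \<in> Hs p (n div d) then 1 else 0 :: real)"
      by simp
  qed
  also have "\<dots> = (\<Sum>d\<in>Dv. cnt d)" unfolding cnt_def by (rule sum.swap)
  finally have G: "real (G_any_any p) = (\<Sum>d\<in>Dv. cnt d)" .
  have "real (G_any_any p) - (\<Sum>e | e dvd n. (1 / real e) * real (totient (n div e)))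
      = (\<Sum>d\<in>Dv. cnt d - (1 / real d) * real (totient (n div d)))"
    unfolding G by (simp add: Dv_def sum_subtractf)
  also have "\<bar>\<dots>\<bar> \<le> (\<Sum>d\<in>Dv. \<bar>cnt d - (1 / real d) * real (totient (n div d))\<bar>)"
    by (rule sum_abs)
  also have "\<dots> \<le> (\<Sum>d\<in>Dv. real (num_divisors n) * E)"
  proof (rule sum_mono)
    fix d assume "d \<in> Dv"
    hence dn: "d dvd n" by (simp add: Dv_def)
    show "\<bar>cnt d - (1 / real d) * real (totient (n div d))\<bar> \<le> real (num_divisors n) * E"
      unfolding cnt_def E_def by (rule per_d_err[OF p n dn])
  qed
  also have "\<dots> = real (card Dv) * (real (num_divisors n) * E)" by simp
  also have "card Dv = num_divisors n" by (simp add: Dv_def num_divisors_def)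
  also have "real (num_divisors n) * (real (num_divisors n) * E)
      = real (num_divisors n) ^ 2 * sqrt (real p) * (1 + ln (real p))"
    by (simp add: E_def power2_eq_square mult_ac)
  finally show ?thesis .
qed

theorem mainTheorem4:
  fixes p :: nat
  assumes "prime p" and "odd p"
  shows "\<bar>real (G_any_any p) - (\<Sum>e | e dvd (p - 1). (1 / real e) * real (totient ((p - 1) div e)))\<bar>
           \<le> real (num_divisors (p - 1)) ^ 2 * sqrt (real p) * (1 + ln (real p))"
  using main_bound[OF assms refl] .

end
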